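(* Let $\mu=(p,q,r,s)\in\mathbb{R}^4$ with $(p,q,r)\neq(0,0,0)$. For all $\varepsilon>0$ and $K>0$ there exists a real triple $(x_1,x_2,x_3)\in\mathbb{R}^3$ with $x_1^2+x_2^2+x_3^2+x_1x_2x_3=px_1+qx_2+rx_3+s$ such that, for some labelling $\{i,j,k\}=\{1,2,3\}$, one has $-(2+\varepsilon)<x_i<-2$, $x_jx_k>0$, $|x_j|>K$ and $|x_k|>K$. *)

theory Defs
  imports Main "HOL.Real"
begin

end

theory Submission
  imports Defs Complex_Main
begin

theorem lemma5p1:
  fixes p q r s :: real
  assumes "(p, q, r) \<noteq> (0, 0, 0)"
  shows "\<forall>\<epsilon>>0. \<forall>K>0. \<exists>x1 x2 x3 :: real.
           x1^2 + x2^2 + x3^2 + x1 * x2 * x3 = p * x1 + q * x2 + r * x3 + s \<and>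
           ((-(2 + \<epsilon>) < x1 \<and> x1 < -2 \<and> x2 * x3 > 0 \<and> \<bar>x2\<bar> > K \<and> \<bar>x3\<bar> > K) \<or>
            (-(2 + \<epsilon>) < x2 \<and> x2 < -2 \<and> x1 * x3 > 0 \<and> \<bar>x1\<bar> > K \<and> \<bar>x3\<bar> > K) \<or>
            (-(2 + \<epsilon>) < x3 \<and> x3 < -2 \<and> x1 * x2 > 0 \<and> \<bar>x1\<bar> > K \<and> \<bar>x2\<bar> > K))"
proof (intro allI impI)
  fix e K :: real
  assume e: "e > 0" and K: "K > 0"
  define t where "t = -2 - e/2"
  define c where "c = t^2 - p*t - s"
  define a where "a = t^2 - 4"
  define b where "b = 4*q - 2*t*r"
  define d where "d = r^2 - 4*c"
  have a: "a > 0" unfolding a_def t_def using e by (simp add: power2_eq_square algebra_simps add_pos_nonneg)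
  define y where "y = 1 + K + \<bar>r\<bar> + (\<bar>b\<bar> + \<bar>d\<bar>)/a"
  define D where "D = (t*y - r)^2 - 4*(y^2 - q*y + c)"
  have D_eq: "D = a*y^2 + b*y + d" unfolding D_def a_def b_def d_def
    by (simp add: power2_eq_square algebra_simps)
  have y1: "y \<ge> 1" and yK: "y > K + \<bar>r\<bar>" and yb: "y \<ge> (\<bar>b\<bar> + \<bar>d\<bar>)/a"
  proof -
    have "(\<bar>b\<bar> + \<bar>d\<bar>)/a \<ge> 0" using a by simp
    thus "y \<ge> 1" "y > K + \<bar>r\<bar>" "y \<ge> (\<bar>b\<bar> + \<bar>d\<bar>)/a"
      unfolding y_def using K by auto
  qed
  have "a*y \<ge> \<bar>b\<bar> + \<bar>d\<bar>" using yb a by (simp add: pos_divide_le_eq mult.commute)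
  hence "a*y*y \<ge> (\<bar>b\<bar> + \<bar>d\<bar>)*y" using y1 by (intro mult_right_mono) auto
  moreover have "\<bar>d\<bar>*y \<ge> \<bar>d\<bar>" using y1 by (simp add: mult_le_cancel_left1)
  moreover have "b*y \<ge> -\<bar>b\<bar>*y" using y1 by (smt (verit) abs_ge_minus_self mult_right_mono)
  moreover have "d \<ge> -\<bar>d\<bar>" by simp
  ultimately have Dpos: "D \<ge> 0" unfolding D_eq by (simp add: power2_eq_square algebra_simps)
  define z where "z = (r - t*y + sqrt D)/2"
  have sq: "(sqrt D)^2 = D" using Dpos by simp
  have eqn: "t^2 + y^2 + z^2 + t*y*z = p*t + q*y + r*z + s"
  proof -
    have "2*z - (r - t*y) = sqrt D" unfolding z_def by (simp add: field_simps)
    hence "(2*z - (r - t*y))^2 = D" using sq by simp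
    thus ?thesis unfolding D_def c_def by (simp add: power2_eq_square algebra_simps)
  qed
  have "-(t*y) \<ge> 2*y" unfolding t_def using e y1 by (simp add: algebra_simps)
  hence "r - t*y + sqrt D > 2*K" using yK real_sqrt_ge_zero[OF Dpos] abs_ge_minus_self[of r] by linarith
  hence zK: "z > K" unfolding z_def by simp
  have "y > 0" using y1 by simp
  moreover have "z > 0" using zK K by simp
  ultimately have "y*z > 0" by simp
  moreover have "-(2+e) < t" "t < -2" unfolding t_def using e by auto
  ultimately show "\<exists>x1 x2 x3 :: real.
           x1^2 + x2^2 + x3^2 + x1 * x2 * x3 = p * x1 + q * x2 + r * x3 + s \<and>
           ((-(2 + e) < x1 \<and> x1 < -2 \<and> x2 * x3 > 0 \<and> \<bar>x2\<bar> > K \<and> \<bar>x3\<bar> > K) \<or>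
            (-(2 + e) < x2 \<and> x2 < -2 \<and> x1 * x3 > 0 \<and> \<bar>x1\<bar> > K \<and> \<bar>x3\<bar> > K) \<or>
            (-(2 + e) < x3 \<and> x3 < -2 \<and> x1 * x2 > 0 \<and> \<bar>x1\<bar> > K \<and> \<bar>x2\<bar> > K))"
    using eqn zK yK by (intro exI[of _ t] exI[of _ y] exI[of _ z]) auto
qed

end
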